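(* Consider the linear MTE model ($M=1$, $h_1(u)=u-\frac12$) and fixed weights $(c_\mu,c_\rho)\ne(0,0)$, $c=(c_\mu,c_\rho,-c_\mu,-c_\rho)'$. For $(\theta,F)\in\mathcal P$ let $\lambda=c'\theta$ and $$S=[\partial_pg(\lambda)]\Sigma_p[\partial_pg(\lambda)]'+[\partial_{\beta_1}g(\lambda)]\Sigma_{\beta_1}[\partial_{\beta_1}g(\lambda)]'+[\partial_{\beta_0}g(\lambda)]\Sigma_{\beta_0}[\partial_{\beta_0}g(\lambda)]'.$$ Then $\inf_{(\theta,F)\in\mathcal P}\lambda_{\min}(S)>0$ and $\sup_{(\theta,F)\in\mathcal P}\lambda_{\max}(S)<\infty$, where $\lambda_{\min},\lambda_{\max}$ denote the smallest and largest eigenvalues.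
   Context: General MTE setup. Observables are $(Y,D,Z)$ with $Y\in\mathbb R$, $D\in\{0,1\}$, $Z$ discrete with support $\{z_0,\dots,z_K\}$. Fix an integer $M\ge1$ and known continuous functions $h_1,\dots,h_M$ on $(0,1)$; set $\lambda_{10}=\lambda_{00}\equiv1$ and for $m=1,\dots,M$, $p\in(0,1)$: $\lambda_{1m}(p)=\frac1p\int_0^p h_m(u)du$, $\lambda_{0m}(p)=\frac1{1-p}\int_p^1 h_m(u)du$. For $p=(p(z_0),\dots,p(z_K))'\in(0,1)^{K+1}$ let $A_d(p)$ be the $(K+1)\times(M+1)$ matrix with $(\ell,m)$ entry $\lambda_{dm}(p(z_\ell))$ ($\ell=0,\dots,K$; $m=0,\dots,M$), and $A(p)=\mathrm{diag}(A_1(p),A_0(p))\in\mathbb R^{2(K+1)\times 2(M+1)}$. Parameters: $\theta=(\theta_1',\theta_0')'$, $\theta_d=(\theta_{d0},\dots,\theta_{dM})'=(\mu_d,\rho_{d1},\dots,\rho_{dM})'$. For a distribution $F$ of $(Y,D,Z)$: $q_F(z_\ell)=P_F(Z=z_\ell)$, $p_F(z_\ell)=P_F(D=1\mid Z=z_\ell)$, $p_F=(p_F(z_0),\dots,p_F(z_K))'$, $q_F(1,z_\ell)=p_F(z_\ell)q_F(z_\ell)$, $q_F(0,z_\ell)=(1-p_F(z_\ell))q_F(z_\ell)$, $\beta_{F,d\ell}=E_F[Y\mid D=d,Z=z_\ell]$, $\beta_{F,d}=(\beta_{F,d0},\dots,\beta_{F,dK})'$, $\beta_F=(\beta_{F,1}',\beta_{F,0}')'$,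 $\sigma^2_{F,d\ell}=\mathrm{Var}_F(Y\mid D=d,Z=z_\ell)$, $A_F=A(p_F)$. Parameter space: fix $\delta,\zeta>0$, $\epsilon\in(0,1/2)$ and a compact $\Theta\subset\mathbb R^{2(M+1)}$ with nonempty interior. $\mathcal P$ is the set of pairs $(\theta,F)$ such that (i) $K\ge M$, $\theta\in\mathrm{int}(\Theta)$ and $A_F\theta=\beta_F$; (ii) $\sup_{d\in\{0,1\}}\sup_{\ell}E_F[|Y|^{2+\delta}\mid D=d,Z=z_\ell]\le\zeta$; (iii) $\epsilon\le p_F(z_\ell)\le 1-\epsilon$ for all $\ell$; (iv) $\epsilon\le q_F(z_\ell)\le1-\epsilon$ for all $\ell$; (v) $\sigma^2_{F,d\ell}\ge\epsilon$ for all $d,\ell$. Linear MTE moments. With $M=1$, $h_1(u)=u-\frac12$ and $c=(c_\mu,c_\rho,-c_\mu,-c_\rho)'$, for $k=1,\dots,K$ and given $(p,\beta)$ define $\Delta_\mu(z_0,z_k)=p(z_k)[\beta_{10}-\beta_{00}]-p(z_0)[\beta_{1k}-\beta_{0k}]+\beta_{1k}-\beta_{10}$, $\Delta_\rho(z_0,z_k)=2(\beta_{00}-\beta_{10}+\beta_{1k}-\beta_{0k})$ and $g_k(\lambda)=[p(z_k)-p(z_0)]\lambda-c_\mu\Delta_\mu(z_0,z_k)-c_\rho\Delta_\rho(z_0,z_k)$, viewed as a function of $(\lambda,p,\beta_1,\beta_0)$; $g(\lambda)=(g_1(\lambda),\dots,g_K(\lambda))'$. In this lemma, $\partial_xg(\lambda)$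 for $x\in\{p,\beta_1,\beta_0\}$ is the $K\times(K+1)$ Jacobian of $g(\lambda)$ with respect to $x$ evaluated at $(p_F,\beta_{F,1},\beta_{F,0})$; $\Sigma_p=\mathrm{diag}\{p_F(z_\ell)(1-p_F(z_\ell))/q_F(z_\ell)\}_\ell$ and $\Sigma_{\beta_d}=\mathrm{diag}\{\sigma^2_{F,d\ell}/q_F(d,z_\ell)\}_\ell$. *)

theory Defs
  imports "HOL-Probability.Probability" "Jordan_Normal_Form.Char_Poly"
begin

(* ---------- Observables: F is a distribution of (Y,D,Z) on real \<times> bool \<times> 'z ---------- *)
(* D = 1 is encoded as True, D = 0 as False.  d ranges over {0,1}::nat. *)

definition obs_sets :: "(real \<times> bool \<times> 'z) set set" where
  "obs_sets = sets (borel \<Otimes>\<^sub>M (count_space UNIV \<Otimes>\<^sub>M count_space UNIV))"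

definition Zev :: "(real \<times> bool \<times> 'z) measure \<Rightarrow> 'z \<Rightarrow> (real \<times> bool \<times> 'z) set" where
  "Zev F z = {w \<in> space F. snd (snd w) = z}"

definition cell :: "(real \<times> bool \<times> 'z) measure \<Rightarrow> nat \<Rightarrow> 'z \<Rightarrow> (real \<times> bool \<times> 'z) set" where
  "cell F d z = {w \<in> space F. fst (snd w) = (d = 1) \<and> snd (snd w) = z}"

definition qF :: "(real \<times> bool \<times> 'z) measure \<Rightarrow> 'z \<Rightarrow> real" where
  "qF F z = measure F (Zev F z)"

definition pF :: "(real \<times> bool \<times> 'z) measure \<Rightarrow> 'z \<Rightarrow> real" where
  "pF F z = measure F (cell F 1 z) / qF F z"

definition qdF :: "(real \<times> bool \<times> 'z) measure \<Rightarrow> nat \<Rightarrow> 'z \<Rightarrow> real" where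
  "qdF F d z = (if d = 1 then pF F z * qF F z else (1 - pF F z) * qF F z)"

definition betaF :: "(real \<times> bool \<times> 'z) measure \<Rightarrow> nat \<Rightarrow> 'z \<Rightarrow> real" where
  "betaF F d z = (\<integral>w. fst w * indicator (cell F d z) w \<partial>F) / measure F (cell F d z)"

definition sigma2F :: "(real \<times> bool \<times> 'z) measure \<Rightarrow> nat \<Rightarrow> 'z \<Rightarrow> real" where
  "sigma2F F d z = (\<integral>w. (fst w - betaF F d z)\<^sup>2 * indicator (cell F d z) w \<partial>F) / measure F (cell F d z)"

(* E[|Y|^(2+\<delta>) | D = d, Z = z] \<le> \<zeta>, written without division *)
definition moment_bound :: "(real \<times> bool \<times> 'z) measure \<Rightarrow> real \<Rightarrow> real \<Rightarrow> nat \<Rightarrow> 'z \<Rightarrow> bool" where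
  "moment_bound F \<delta> \<zeta> d z \<longleftrightarrow>
     (\<integral>\<^sup>+w. ennreal (\<bar>fst w\<bar> powr (2 + \<delta>)) * indicator (cell F d z) w \<partial>F)
       \<le> ennreal \<zeta> * emeasure F (cell F d z)"

definition h1 :: "real \<Rightarrow> real" where
  "h1 u = u - 1/2"

definition lam :: "nat \<Rightarrow> nat \<Rightarrow> real \<Rightarrow> real" where
  "lam d m p =
     (if m = 0 then 1
      else if d = 1 then (1 / p) * integral {0..p} h1
      else (1 / (1 - p)) * integral {p..1} h1)"

(* \<theta> = (\<theta>_1, \<theta>_0), \<theta>_d = (\<mu>_d, \<rho>_{d1});  thc \<theta> d m = \<theta>_{dm} *)
definition thc :: "(real \<times> real) \<times> (real \<times> real) \<Rightarrow> nat \<Rightarrow> nat \<Rightarrow> real" where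
  "thc \<theta> d m = (let t = (if d = 1 then fst \<theta> else snd \<theta>) in if m = 0 then fst t else snd t)"

(* (A(p) \<theta>) = \<beta>, row by row; pv, bv indexed by r = 0..K *)
definition A_eq :: "nat \<Rightarrow> (nat \<Rightarrow> real) \<Rightarrow> (real \<times> real) \<times> (real \<times> real) \<Rightarrow> (nat \<Rightarrow> nat \<Rightarrow> real) \<Rightarrow> bool" where
  "A_eq K pv \<theta> bv \<longleftrightarrow>
     (\<forall>d\<in>{0,1}. \<forall>r\<le>K. (\<Sum>m\<le>1. lam d m (pv r) * thc \<theta> d m) = bv d r)"

definition inP ::
  "nat \<Rightarrow> (nat \<Rightarrow> 'z) \<Rightarrow> real \<Rightarrow> real \<Rightarrow> real \<Rightarrow> ((real \<times> real) \<times> (real \<times> real)) set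
   \<Rightarrow> (real \<times> real) \<times> (real \<times> real) \<Rightarrow> (real \<times> bool \<times> 'z) measure \<Rightarrow> bool" where
  "inP K z \<delta> \<zeta> \<epsilon> \<Theta> \<theta> F \<longleftrightarrow>
     prob_space F \<and> sets F = obs_sets \<and>
     measure F {w \<in> space F. snd (snd w) \<in> z ` {0..K}} = 1 \<and>
     K \<ge> 1 \<and> \<theta> \<in> interior \<Theta> \<and>
     A_eq K (\<lambda>r. pF F (z r)) \<theta> (\<lambda>d r. betaF F d (z r)) \<and>
     (\<forall>d\<in>{0,1}. \<forall>r\<le>K. moment_bound F \<delta> \<zeta> d (z r)) \<and>
     (\<forall>r\<le>K. \<epsilon> \<le> pF F (z r) \<and> pF F (z r) \<le> 1 - \<epsilon>) \<and>
     (\<forall>r\<le>K. \<epsilon> \<le> qF F (z r) \<and> qF F (z r) \<le> 1 - \<epsilon>) \<and>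
     (\<forall>d\<in>{0,1}. \<forall>r\<le>K. sigma2F F d (z r) \<ge> \<epsilon>)"

definition Delta_mu :: "(nat \<Rightarrow> real) \<Rightarrow> (nat \<Rightarrow> real) \<Rightarrow> (nat \<Rightarrow> real) \<Rightarrow> nat \<Rightarrow> real" where
  "Delta_mu p b1 b0 k = p k * (b1 0 - b0 0) - p 0 * (b1 k - b0 k) + b1 k - b1 0"

definition Delta_rho :: "(nat \<Rightarrow> real) \<Rightarrow> (nat \<Rightarrow> real) \<Rightarrow> nat \<Rightarrow> real" where
  "Delta_rho b1 b0 k = 2 * (b0 0 - b1 0 + b1 k - b0 k)"

definition gk :: "real \<Rightarrow> real \<Rightarrow> nat \<Rightarrow> real \<Rightarrow> (nat \<Rightarrow> real) \<Rightarrow> (nat \<Rightarrow> real) \<Rightarrow> (nat \<Rightarrow> real) \<Rightarrow> real" where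
  "gk c_mu c_rho k l p b1 b0 =
     (p k - p 0) * l - c_mu * Delta_mu p b1 b0 k - c_rho * Delta_rho b1 b0 k"

definition Jp :: "real \<Rightarrow> real \<Rightarrow> real \<Rightarrow> (nat \<Rightarrow> real) \<Rightarrow> (nat \<Rightarrow> real) \<Rightarrow> (nat \<Rightarrow> real) \<Rightarrow> nat \<Rightarrow> nat \<Rightarrow> real" where
  "Jp c_mu c_rho l p b1 b0 k r = deriv (\<lambda>t. gk c_mu c_rho k l (p(r := p r + t)) b1 b0) 0"

definition Jb1 :: "real \<Rightarrow> real \<Rightarrow> real \<Rightarrow> (nat \<Rightarrow> real) \<Rightarrow> (nat \<Rightarrow> real) \<Rightarrow> (nat \<Rightarrow> real) \<Rightarrow> nat \<Rightarrow> nat \<Rightarrow> real" where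
  "Jb1 c_mu c_rho l p b1 b0 k r = deriv (\<lambda>t. gk c_mu c_rho k l p (b1(r := b1 r + t)) b0) 0"

definition Jb0 :: "real \<Rightarrow> real \<Rightarrow> real \<Rightarrow> (nat \<Rightarrow> real) \<Rightarrow> (nat \<Rightarrow> real) \<Rightarrow> (nat \<Rightarrow> real) \<Rightarrow> nat \<Rightarrow> nat \<Rightarrow> real" where
  "Jb0 c_mu c_rho l p b1 b0 k r = deriv (\<lambda>t. gk c_mu c_rho k l p b1 (b0(r := b0 r + t))) 0"

definition c_theta :: "real \<Rightarrow> real \<Rightarrow> (real \<times> real) \<times> (real \<times> real) \<Rightarrow> real" where
  "c_theta c_mu c_rho \<theta> = c_mu * thc \<theta> 1 0 + c_rho * thc \<theta> 1 1 - c_mu * thc \<theta> 0 0 - c_rho * thc \<theta> 0 1"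

(* The K \<times> K matrix S; matrix index i < K corresponds to moment k = i + 1 *)
definition S_mat :: "nat \<Rightarrow> (nat \<Rightarrow> 'z) \<Rightarrow> real \<Rightarrow> real \<Rightarrow> (real \<times> real) \<times> (real \<times> real)
                     \<Rightarrow> (real \<times> bool \<times> 'z) measure \<Rightarrow> real mat" where
  "S_mat K z c_mu c_rho \<theta> F =
     (let l = c_theta c_mu c_rho \<theta>;
          p = (\<lambda>r. pF F (z r));
          b1 = (\<lambda>r. betaF F 1 (z r));
          b0 = (\<lambda>r. betaF F 0 (z r));
          Sp = (\<lambda>r. pF F (z r) * (1 - pF F (z r)) / qF F (z r));
          Sb1 = (\<lambda>r. sigma2F F 1 (z r) / qdF F 1 (z r));
          Sb0 = (\<lambda>r. sigma2F F 0 (z r) / qdF F 0 (z r))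
      in mat K K (\<lambda>(i, j).
           (\<Sum>r\<le>K. Jp c_mu c_rho l p b1 b0 (i+1) r * Sp r * Jp c_mu c_rho l p b1 b0 (j+1) r)
         + (\<Sum>r\<le>K. Jb1 c_mu c_rho l p b1 b0 (i+1) r * Sb1 r * Jb1 c_mu c_rho l p b1 b0 (j+1) r)
         + (\<Sum>r\<le>K. Jb0 c_mu c_rho l p b1 b0 (i+1) r * Sb0 r * Jb0 c_mu c_rho l p b1 b0 (j+1) r)))"

end

theory Submission
  imports Defs
begin

lemma deriv_affine: "deriv (\<lambda>t::real. a + t * d) 0 = d"
  by (rule DERIV_imp_deriv) (auto intro!: derivative_eq_intros)

lemma Jb1_eq: assumes "k \<noteq> 0"
  shows "Jb1 cm cr l p b1 b0 k r = (if r = 0 then cm*(1 - p k) + 2*cr else if r = k then -(cm*(1 - p 0)) - 2*cr else 0)"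
proof -
  have "(\<lambda>t. gk cm cr k l p (b1(r := b1 r + t)) b0) = (\<lambda>t. gk cm cr k l p b1 b0 + t * (if r = 0 then cm*(1 - p k) + 2*cr else if r = k then -(cm*(1 - p 0)) - 2*cr else 0))"
    using assms by (auto simp: gk_def Delta_mu_def Delta_rho_def algebra_simps fun_eq_iff)
  then show ?thesis unfolding Jb1_def using deriv_affine by simp
qed

lemma Jb0_eq: assumes "k \<noteq> 0"
  shows "Jb0 cm cr l p b1 b0 k r = (if r = 0 then cm * p k - 2*cr else if r = k then -(cm * p 0) + 2*cr else 0)"
proof -
  have "(\<lambda>t. gk cm cr k l p b1 (b0(r := b0 r + t))) = (\<lambda>t. gk cm cr k l p b1 b0 + t * (if r = 0 then cm * p k - 2*cr else if r = k then -(cm * p 0) + 2*cr else 0))"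
    using assms by (auto simp: gk_def Delta_mu_def Delta_rho_def algebra_simps fun_eq_iff)
  then show ?thesis unfolding Jb0_def using deriv_affine by simp
qed

lemma Jp_eq: assumes "k \<noteq> 0"
  shows "Jp cm cr l p b1 b0 k r = (if r = 0 then -l + cm * (b1 k - b0 k) else if r = k then l - cm * (b1 0 - b0 0) else 0)"
proof -
  have "(\<lambda>t. gk cm cr k l (p(r := p r + t)) b1 b0) = (\<lambda>t. gk cm cr k l p b1 b0 + t * (if r = 0 then -l + cm * (b1 k - b0 k) else if r = k then l - cm * (b1 0 - b0 0) else 0))"
    using assms by (auto simp: gk_def Delta_mu_def Delta_rho_def algebra_simps fun_eq_iff)
  then show ?thesis unfolding Jp_def using deriv_affine by simp
qed

lemma h1_int: assumes "a \<le> b" shows "integral {a..b} h1 = (b^2/2 - b/2) - (a^2/2 - a/2)"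
proof -
  have "(h1 has_integral ((b^2/2 - b/2) - (a^2/2 - a/2))) {a..b}"
    using assms
    by (intro fundamental_theorem_of_calculus[where f="\<lambda>u. u^2/2 - u/2"])
       (auto simp: h1_def intro!: derivative_eq_intros simp: has_real_derivative_iff_has_vector_derivative[symmetric])
  then show ?thesis by (rule integral_unique)
qed

lemma lam11: "0 < p \<Longrightarrow> p < 1 \<Longrightarrow> lam 1 1 p = (p - 1)/2"
  by (simp add: lam_def h1_int field_simps power2_eq_square)

lemma lam01: "0 < p \<Longrightarrow> p < 1 \<Longrightarrow> lam 0 1 p = p/2"
  by (simp add: lam_def h1_int field_simps power2_eq_square)

lemma cell_sets:
  assumes sF: "sets F = obs_sets"
  shows "cell F d z \<in> sets F"
proof -
  have sF': "sets F = sets (borel \<Otimes>\<^sub>M (count_space UNIV \<Otimes>\<^sub>M count_space UNIV))"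
    using sF by (simp add: obs_sets_def)
  have m: "(snd :: real \<times> bool \<times> 'a \<Rightarrow> bool \<times> 'a) \<in> measurable F (count_space UNIV \<Otimes>\<^sub>M count_space UNIV)"
    by (subst measurable_cong_sets[OF sF' refl]) simp
  have "{(d = 1, z)} = {d = 1} \<times> {z}" by auto
  then have s: "{(d = 1, z)} \<in> sets (count_space UNIV \<Otimes>\<^sub>M count_space UNIV)"
    by (metis UNIV_I pair_measureI sets_count_space Pow_UNIV)
  have "cell F d z = snd -` {(d = 1, z)} \<inter> space F"
    by (auto simp: cell_def prod_eq_iff)
  then show ?thesis using measurable_sets[OF m s] by simp
qed

lemma fst_meas:
  assumes sF: "sets F = obs_sets"
  shows "(\<lambda>w. ennreal (\<bar>fst w\<bar> powr (2 + \<delta>))) \<in> borel_measurable F"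
proof -
  have sF': "sets F = sets (borel \<Otimes>\<^sub>M (count_space UNIV \<Otimes>\<^sub>M count_space UNIV))"
    using sF by (simp add: obs_sets_def)
  show ?thesis
    by (subst measurable_cong_sets[OF sF' refl]) measurable
qed

lemma pw_bound:
  fixes y b \<delta> :: real assumes "\<delta> > 0"
  shows "(y - b)^2 \<le> (2 + 2 * b^2) + 2 * (\<bar>y\<bar> powr (2 + \<delta>))"
proof -
  have "y^2 \<le> 1 + \<bar>y\<bar> powr (2 + \<delta>)"
  proof (cases "\<bar>y\<bar> \<le> 1")
    case True
    then have "y^2 \<le> 1" by (metis abs_le_square_iff abs_one one_power2)
    then show ?thesis using powr_ge_zero[of "\<bar>y\<bar>" "2+\<delta>"] by linarith
  next
    case False
    then have "\<bar>y\<bar> powr 2 \<le> \<bar>y\<bar> powr (2 + \<delta>)" using assms by (intro powr_mono) auto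
    moreover have "\<bar>y\<bar> powr 2 = y^2" using False by (simp add: powr_numeral)
    ultimately show ?thesis by simp
  qed
  moreover have "(y - b)^2 \<le> 2 * y^2 + 2 * b^2"
    using sum_squares_ge_zero[of "y+b" 0] by (simp add: power2_eq_square algebra_simps)
  ultimately show ?thesis by linarith
qed

lemma ennreal_plus_mult2: "0 \<le> A \<Longrightarrow> 0 \<le> c \<Longrightarrow> ennreal A + 2 * ennreal c = ennreal (A + 2 * c)"
  by (simp add: ennreal_plus ennreal_mult)

lemma sigma_bound:
  fixes F :: "(real \<times> bool \<times> 'z) measure"
  assumes P: "prob_space F" and sF: "sets F = obs_sets"
    and mb: "moment_bound F \<delta> \<zeta> d z" and se: "sigma2F F d z \<ge> \<epsilon>" and "\<epsilon> > 0" and "\<delta> > 0" and "\<zeta> > 0"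
  shows "sigma2F F d z \<le> 2 + 2 * (betaF F d z)^2 + 2 * \<zeta>"
proof -
  interpret prob_space F by fact
  define b where "b = betaF F d z"
  define C where "C = cell F d z"
  have Cs: "C \<in> sets F" unfolding C_def by (rule cell_sets[OF sF])
  have sdef: "sigma2F F d z = (\<integral>w. (fst w - b)\<^sup>2 * indicator C w \<partial>F) / measure F C"
    by (simp add: sigma2F_def b_def C_def)
  have int: "integrable F (\<lambda>w. (fst w - b)\<^sup>2 * indicator C w)"
  proof (rule ccontr)
    assume "\<not> ?thesis"
    then have "sigma2F F d z = 0" by (simp add: sdef not_integrable_integral_eq)
    then show False using se \<open>\<epsilon> > 0\<close> by simp
  qed
  have mC: "measure F C > 0"
  proof (rule ccontr)
    assume "\<not> ?thesis"
    then have "measure F C = 0" using measure_nonneg[of F C] by linarith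
    then have "sigma2F F d z = 0" by (simp add: sdef)
    then show False using se \<open>\<epsilon> > 0\<close> by simp
  qed
  have "ennreal (\<integral>w. (fst w - b)\<^sup>2 * indicator C w \<partial>F) = (\<integral>\<^sup>+w. ennreal ((fst w - b)\<^sup>2 * indicator C w) \<partial>F)"
    by (rule nn_integral_eq_integral[OF int, symmetric]) auto
  also have "\<dots> \<le> (\<integral>\<^sup>+w. ennreal (2 + 2 * b^2) * indicator C w + 2 * (ennreal (\<bar>fst w\<bar> powr (2 + \<delta>)) * indicator C w) \<partial>F)"
  proof (rule nn_integral_mono)
    fix w :: "real \<times> bool \<times> 'z"
    have "(fst w - b)^2 \<le> (2 + 2 * b^2) + 2 * (\<bar>fst w\<bar> powr (2 + \<delta>))"
      by (rule pw_bound) fact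
    then have "ennreal ((fst w - b)^2) \<le> ennreal (2 + 2 * b^2) + 2 * ennreal (\<bar>fst w\<bar> powr (2 + \<delta>))"
      by (subst ennreal_plus_mult2) (auto intro!: ennreal_leI simp del: ennreal_plus)
    then show "ennreal ((fst w - b)\<^sup>2 * indicator C w) \<le> ennreal (2 + 2 * b^2) * indicator C w + 2 * (ennreal (\<bar>fst w\<bar> powr (2 + \<delta>)) * indicator C w)"
      by (auto split: split_indicator)
  qed
  also have "\<dots> = ennreal (2 + 2 * b^2) * emeasure F C + 2 * (\<integral>\<^sup>+w. ennreal (\<bar>fst w\<bar> powr (2 + \<delta>)) * indicator C w \<partial>F)"
    using Cs fst_meas[OF sF, of \<delta>]
    by (subst nn_integral_add) (auto simp: nn_integral_cmult_indicator nn_integral_cmult)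
  also have "\<dots> \<le> ennreal (2 + 2 * b^2) * emeasure F C + 2 * (ennreal \<zeta> * emeasure F C)"
    using mb by (intro add_left_mono mult_left_mono) (auto simp: moment_bound_def C_def)
  also have "\<dots> = ennreal ((2 + 2 * b^2 + 2 * \<zeta>) * measure F C)"
  proof -
    have "ennreal (2 + 2 * b^2) * emeasure F C + 2 * (ennreal \<zeta> * emeasure F C)
       = ennreal ((2 + 2 * b^2) * measure F C) + 2 * ennreal (\<zeta> * measure F C)"
      using \<open>\<zeta> > 0\<close> by (simp add: emeasure_eq_measure ennreal_mult)
    also have "\<dots> = ennreal ((2 + 2 * b^2) * measure F C + 2 * (\<zeta> * measure F C))"
      using \<open>\<zeta> > 0\<close> by (intro ennreal_plus_mult2) auto
    finally show ?thesis by (simp add: algebra_simps)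
  qed
  finally have "(\<integral>w. (fst w - b)\<^sup>2 * indicator C w \<partial>F) \<le> (2 + 2 * b^2 + 2 * \<zeta>) * measure F C"
    using mC \<open>\<zeta> > 0\<close> by (subst (asm) ennreal_le_iff) (auto intro!: mult_nonneg_nonneg)
  then show ?thesis using mC by (simp add: sdef b_def divide_le_eq)
qed

lemma eig_rows:
  fixes f :: "nat \<Rightarrow> nat \<Rightarrow> real"
  assumes "eigenvalue (mat K K (\<lambda>(i,j). f i j)) e"
  obtains x :: "nat \<Rightarrow> real" where "\<forall>i<K. e * x i = (\<Sum>j<K. f i j * x j)" "\<exists>i<K. x i \<noteq> 0"
proof -
  from assms obtain v where v: "v \<in> carrier_vec K" "v \<noteq> 0\<^sub>v K" "mat K K (\<lambda>(i,j). f i j) *\<^sub>v v = e \<cdot>\<^sub>v v"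
    by (auto simp: eigenvalue_def eigenvector_def)
  have rows: "\<forall>i<K. e * v$i = (\<Sum>j<K. f i j * v$j)"
  proof (intro allI impI)
    fix i assume i: "i<K"
    have "(mat K K (\<lambda>(i,j). f i j) *\<^sub>v v) $ i = (e \<cdot>\<^sub>v v) $ i" using v(3) by simp
    then show "e * v$i = (\<Sum>j<K. f i j * v$j)" using i v(1) by (simp add: scalar_prod_def row_def lessThan_atLeast0)
  qed
  have "\<exists>i<K. v$i \<noteq> 0"
  proof (rule ccontr)
    assume "\<not> ?thesis"
    then have "v = 0\<^sub>v K" using v(1) by (intro eq_vecI) auto
    then show False using v(2) by simp
  qed
  then show thesis using that rows by blast
qed

lemma eig_upper:
  fixes f :: "nat \<Rightarrow> nat \<Rightarrow> real"
  assumes "eigenvalue (mat K K (\<lambda>(i,j). f i j)) e" "\<forall>i<K. \<forall>j<K. \<bar>f i j\<bar> \<le> C"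
  shows "e \<le> real K * C"
proof -
  obtain x where x: "\<forall>i<K. e * x i = (\<Sum>j<K. f i j * x j)" "\<exists>i<K. x i \<noteq> 0"
    using eig_rows[OF assms(1)] by blast
  define m where "m = Max ((\<lambda>i. \<bar>x i\<bar>) ` {..<K})"
  have K: "K > 0" using x(2) by auto
  obtain i0 where i0: "i0 < K" "\<bar>x i0\<bar> = m"
  proof -
    have "m \<in> (\<lambda>i. \<bar>x i\<bar>) ` {..<K}" unfolding m_def using K by (intro Max_in) auto
    then show ?thesis using that by auto
  qed
  have ge: "\<forall>j<K. \<bar>x j\<bar> \<le> m" by (auto simp: m_def)
  have mpos: "m > 0" using x(2) ge by force
  have C0: "0 \<le> C" using assms(2) K by (meson abs_ge_zero order_trans)
  have "\<bar>e\<bar> * m = \<bar>\<Sum>j<K. f i0 j * x j\<bar>" using x(1) i0 by (metis abs_mult)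
  also have "\<dots> \<le> (\<Sum>j<K. \<bar>f i0 j * x j\<bar>)" by (rule sum_abs)
  also have "\<dots> \<le> (\<Sum>j<K. C * m)"
    using assms(2) ge i0 C0 by (intro sum_mono) (auto simp: abs_mult intro!: mult_mono)
  also have "\<dots> = real K * C * m" by simp
  finally have "\<bar>e\<bar> \<le> real K * C" using mpos by simp
  then show ?thesis by simp
qed

lemma quad_expand:
  fixes x :: "nat \<Rightarrow> real"
  shows "(\<Sum>i<K. x i * (\<Sum>j<K. (\<Sum>r\<le>N. P i r * a r * P j r) * x j)) = (\<Sum>r\<le>N. a r * (\<Sum>i<K. x i * P i r)^2)"
proof -
  have "(\<Sum>i<K. x i * (\<Sum>j<K. (\<Sum>r\<le>N. P i r * a r * P j r) * x j)) = (\<Sum>i<K. \<Sum>j<K. \<Sum>r\<le>N. a r * (x i * P i r) * (x j * P j r))"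
    by (simp add: sum_distrib_left sum_distrib_right mult_ac)
  also have "\<dots> = (\<Sum>i<K. \<Sum>r\<le>N. \<Sum>j<K. a r * (x i * P i r) * (x j * P j r))"
    by (rule sum.cong[OF refl], rule sum.swap)
  also have "\<dots> = (\<Sum>r\<le>N. \<Sum>i<K. \<Sum>j<K. a r * (x i * P i r) * (x j * P j r))"
    by (rule sum.swap)
  also have "\<dots> = (\<Sum>r\<le>N. a r * (\<Sum>i<K. x i * P i r)^2)"
    by (simp add: power2_eq_square sum_distrib_left sum_distrib_right mult_ac)
  finally show ?thesis .
qed

lemma diag_part:
  fixes x :: "nat \<Rightarrow> real"
  assumes a: "\<forall>r\<le>K. \<eta> \<le> a r" and "0 \<le> \<eta>"
    and P: "\<forall>i<K. P (i+1) (i+1) = Y \<and> (\<forall>r. r \<noteq> 0 \<and> r \<noteq> i+1 \<longrightarrow> P (i+1) r = 0)"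
  shows "\<eta> * Y^2 * (\<Sum>i<K. (x i)^2) \<le> (\<Sum>r\<le>K. a r * (\<Sum>i<K. x i * P (i+1) r)^2)"
proof -
  have "(\<Sum>r\<in>Suc ` {..<K}. a r * (\<Sum>i<K. x i * P (i+1) r)^2) \<le> (\<Sum>r\<le>K. a r * (\<Sum>i<K. x i * P (i+1) r)^2)"
    using a \<open>0 \<le> \<eta>\<close> by (intro sum_mono2) (auto intro!: mult_nonneg_nonneg)
  moreover have "(\<Sum>r\<in>Suc ` {..<K}. a r * (\<Sum>i<K. x i * P (i+1) r)^2) = (\<Sum>k<K. a (Suc k) * (\<Sum>i<K. x i * P (i+1) (Suc k))^2)"
    by (subst sum.reindex) auto
  moreover have "\<forall>k<K. (\<Sum>i<K. x i * P (i+1) (Suc k)) = x k * Y"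
  proof (intro allI impI)
    fix k assume k: "k < K"
    have "(\<Sum>i<K. x i * P (i+1) (Suc k)) = (\<Sum>i<K. if i = k then x k * Y else 0)"
      using P k by (intro sum.cong) auto
    then show "(\<Sum>i<K. x i * P (i+1) (Suc k)) = x k * Y" using k by simp
  qed
  moreover have "(\<Sum>k<K. \<eta> * (x k * Y)^2) \<le> (\<Sum>k<K. a (Suc k) * (x k * Y)^2)"
    using a by (intro sum_mono mult_right_mono) auto
  moreover have "(\<Sum>k<K. \<eta> * (x k * Y)^2) = \<eta> * Y^2 * (\<Sum>i<K. (x i)^2)"
    by (simp add: sum_distrib_left power_mult_distrib mult_ac)
  ultimately show ?thesis by simp
qed

lemma eig_lower:
  fixes Pp P1 P0 :: "nat \<Rightarrow> nat \<Rightarrow> real"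
  assumes eig: "eigenvalue (mat K K (\<lambda>(i,j). (\<Sum>r\<le>K. Pp (i+1) r * ap r * Pp (j+1) r) + (\<Sum>r\<le>K. P1 (i+1) r * a1 r * P1 (j+1) r) + (\<Sum>r\<le>K. P0 (i+1) r * a0 r * P0 (j+1) r))) e"
    and ap: "\<forall>r\<le>K. 0 \<le> ap r" and a1: "\<forall>r\<le>K. \<eta> \<le> a1 r" and a0: "\<forall>r\<le>K. \<eta> \<le> a0 r" and eta: "0 \<le> \<eta>"
    and P1: "\<forall>i<K. P1 (i+1) (i+1) = Ya \<and> (\<forall>r. r \<noteq> 0 \<and> r \<noteq> i+1 \<longrightarrow> P1 (i+1) r = 0)"
    and P0: "\<forall>i<K. P0 (i+1) (i+1) = Yb \<and> (\<forall>r. r \<noteq> 0 \<and> r \<noteq> i+1 \<longrightarrow> P0 (i+1) r = 0)"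
    and L: "L \<le> Ya^2 + Yb^2"
  shows "\<eta> * L \<le> e"
proof -
  define f where "f i j = (\<Sum>r\<le>K. Pp (i+1) r * ap r * Pp (j+1) r) + (\<Sum>r\<le>K. P1 (i+1) r * a1 r * P1 (j+1) r) + (\<Sum>r\<le>K. P0 (i+1) r * a0 r * P0 (j+1) r)" for i j
  have "eigenvalue (mat K K (\<lambda>(i,j). f i j)) e" using eig by (simp only: f_def)
  then obtain x where x: "\<forall>i<K. e * x i = (\<Sum>j<K. f i j * x j)" "\<exists>i<K. x i \<noteq> 0"
    using eig_rows by blast
  define s where "s = (\<Sum>i<K. (x i)^2)"
  obtain i0 where i0: "i0 < K" "x i0 \<noteq> 0" using x(2) by blast
  have spos: "s > 0" unfolding s_def
    by (rule sum_pos2[of "{..<K}" i0]) (use i0 in auto)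
  have "e * s = (\<Sum>i<K. x i * (e * x i))" by (simp add: s_def sum_distrib_left power2_eq_square mult_ac)
  also have "\<dots> = (\<Sum>i<K. x i * (\<Sum>j<K. f i j * x j))" using x(1) by (intro sum.cong) auto
  also have "\<dots> = (\<Sum>i<K. x i * (\<Sum>j<K. (\<Sum>r\<le>K. Pp (i+1) r * ap r * Pp (j+1) r) * x j))
             + (\<Sum>i<K. x i * (\<Sum>j<K. (\<Sum>r\<le>K. P1 (i+1) r * a1 r * P1 (j+1) r) * x j))
             + (\<Sum>i<K. x i * (\<Sum>j<K. (\<Sum>r\<le>K. P0 (i+1) r * a0 r * P0 (j+1) r) * x j))"
    unfolding f_def distrib_right distrib_left sum.distrib by (rule refl)
  also have "\<dots> = (\<Sum>r\<le>K. ap r * (\<Sum>i<K. x i * Pp (i+1) r)^2) + (\<Sum>r\<le>K. a1 r * (\<Sum>i<K. x i * P1 (i+1) r)^2)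
       + (\<Sum>r\<le>K. a0 r * (\<Sum>i<K. x i * P0 (i+1) r)^2)"
    by (simp only: quad_expand[where P="\<lambda>i r. Pp (i+1) r"] quad_expand[where P="\<lambda>i r. P1 (i+1) r"] quad_expand[where P="\<lambda>i r. P0 (i+1) r"])
  finally have es: "e * s = \<dots>" .
  have "0 \<le> (\<Sum>r\<le>K. ap r * (\<Sum>i<K. x i * Pp (i+1) r)^2)" using ap by (intro sum_nonneg) auto
  moreover have "\<eta> * Ya^2 * s \<le> (\<Sum>r\<le>K. a1 r * (\<Sum>i<K. x i * P1 (i+1) r)^2)"
    unfolding s_def by (rule diag_part[OF a1 eta P1])
  moreover have "\<eta> * Yb^2 * s \<le> (\<Sum>r\<le>K. a0 r * (\<Sum>i<K. x i * P0 (i+1) r)^2)"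
    unfolding s_def by (rule diag_part[OF a0 eta P0])
  moreover have "\<eta> * (Ya^2 + Yb^2) * s = \<eta> * Ya^2 * s + \<eta> * Yb^2 * s" by (simp add: algebra_simps)
  ultimately have "\<eta> * (Ya^2 + Yb^2) * s \<le> e * s" using es by linarith
  moreover have "\<eta> * L * s \<le> \<eta> * (Ya^2 + Yb^2) * s" using L eta spos by (intro mult_right_mono mult_left_mono) auto
  ultimately show ?thesis using spos by (meson mult_le_cancel_right_pos order_trans)
qed

lemma sum_le1: "(\<Sum>m\<le>(1::nat). g m) = g 0 + (g 1 :: real)"
  by (simp add: atMost_Suc)

lemma lam_bound: "0 < p \<Longrightarrow> p < 1 \<Longrightarrow> d \<in> {0,1} \<Longrightarrow> \<bar>lam d 1 p\<bar> \<le> 1/2"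
  using lam11[of p] lam01[of p] by auto

lemma lam0: "lam d 0 p = 1" by (simp add: lam_def)

lemma thc_bound: "\<bar>thc \<theta> d m\<bar> \<le> norm \<theta>"
proof -
  obtain a b c e where th: "\<theta> = ((a,b),(c,e))" by (metis prod.collapse)
  have "norm (a,b) \<le> norm \<theta>" "norm (c,e) \<le> norm \<theta>" unfolding th by (rule norm_fst_le, rule norm_snd_le)
  moreover have "\<bar>a\<bar> \<le> norm (a,b)" "\<bar>b\<bar> \<le> norm (a,b)" "\<bar>c\<bar> \<le> norm (c,e)" "\<bar>e\<bar> \<le> norm (c,e)"
    using norm_fst_le[of a b] norm_snd_le[of b a] norm_fst_le[of c e] norm_snd_le[of e c] by auto
  ultimately show ?thesis unfolding thc_def Let_def th by auto
qed

lemma w_bound: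
  fixes \<epsilon> a q s Cs :: real
  assumes "0 < \<epsilon>" "\<epsilon> \<le> a" "a \<le> 1" "\<epsilon> \<le> q" "q \<le> 1" "\<epsilon> \<le> s" "s \<le> Cs"
  shows "\<epsilon> \<le> s / (a * q) \<and> s / (a * q) \<le> Cs / \<epsilon>^2"
proof
  have aq: "0 < a * q" "a * q \<le> 1" using assms by (auto intro: mult_le_one)
  have "s * (a * q) \<le> s * 1" using aq assms by (intro mult_left_mono) auto
  then have "s \<le> s / (a * q)" using aq by (simp add: le_divide_eq)
  then show "\<epsilon> \<le> s / (a * q)" using assms by linarith
  have "\<epsilon>^2 \<le> a * q" unfolding power2_eq_square using assms by (intro mult_mono) auto
  then show "s / (a * q) \<le> Cs / \<epsilon>^2"
    using assms by (intro frac_le) auto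
qed

lemma term_bound:
  fixes P Q a CJ CS :: real
  assumes "\<bar>P\<bar> \<le> CJ" "\<bar>Q\<bar> \<le> CJ" "0 \<le> a" "a \<le> CS"
  shows "\<bar>P * a * Q\<bar> \<le> CJ * CS * CJ"
proof -
  have "\<bar>P * a * Q\<bar> = \<bar>P\<bar> * a * \<bar>Q\<bar>" using assms by (simp add: abs_mult)
  also have "\<dots> \<le> CJ * CS * CJ" using assms by (intro mult_mono) auto
  finally show ?thesis .
qed

lemma sum_term_bound:
  fixes P Q a :: "nat \<Rightarrow> real"
  assumes "\<forall>r\<le>K. \<bar>P r\<bar> \<le> CJ \<and> \<bar>Q r\<bar> \<le> CJ \<and> 0 \<le> a r \<and> a r \<le> CS"
  shows "\<bar>\<Sum>r\<le>K. P r * a r * Q r\<bar> \<le> (real K + 1) * (CJ * CS * CJ)"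
proof -
  have "\<bar>\<Sum>r\<le>K. P r * a r * Q r\<bar> \<le> (\<Sum>r\<le>K. \<bar>P r * a r * Q r\<bar>)" by (rule sum_abs)
  also have "\<dots> \<le> (\<Sum>r\<le>K. CJ * CS * CJ)" using assms by (intro sum_mono term_bound) auto
  also have "\<dots> = (real K + 1) * (CJ * CS * CJ)" by simp
  finally show ?thesis .
qed

lemma facts:
  fixes F :: "(real \<times> bool \<times> 'z) measure"
  assumes inP: "inP K z \<delta> \<zeta> \<epsilon> \<Theta> \<theta> F" and Bd: "\<forall>\<theta>\<in>\<Theta>. norm \<theta> \<le> B"
    and pos: "0 < \<epsilon>" "0 < \<delta>" "0 < \<zeta>" "\<epsilon> < 1/2"
  shows "\<forall>r\<le>K. \<epsilon> \<le> pF F (z r) \<and> pF F (z r) \<le> 1 - \<epsilon>"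
   and "\<forall>r\<le>K. \<epsilon> \<le> qF F (z r) \<and> qF F (z r) \<le> 1 - \<epsilon>"
   and "\<forall>d\<in>{0,1}. \<forall>r\<le>K. \<bar>betaF F d (z r)\<bar> \<le> 2 * B"
   and "\<bar>c_theta cm cr \<theta>\<bar> \<le> 2 * (\<bar>cm\<bar> + \<bar>cr\<bar>) * B"
   and "\<forall>d\<in>{0,1}. \<forall>r\<le>K. \<epsilon> \<le> sigma2F F d (z r) \<and> sigma2F F d (z r) \<le> 2 + 8 * B^2 + 2 * \<zeta>"
proof -
  have tB: "\<bar>thc \<theta> d m\<bar> \<le> B" for d m
    using inP Bd interior_subset thc_bound[of \<theta> d m] unfolding inP_def by fastforce
  then have B0: "0 \<le> B" by (meson abs_ge_zero order_trans)
  show P: "\<forall>r\<le>K. \<epsilon> \<le> pF F (z r) \<and> pF F (z r) \<le> 1 - \<epsilon>" using inP by (simp add: inP_def)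
  show "\<forall>r\<le>K. \<epsilon> \<le> qF F (z r) \<and> qF F (z r) \<le> 1 - \<epsilon>" using inP by (simp add: inP_def)
  have A: "A_eq K (\<lambda>r. pF F (z r)) \<theta> (\<lambda>d r. betaF F d (z r))" using inP by (simp add: inP_def)
  have beta: "\<bar>betaF F d (z r)\<bar> \<le> 2 * B" if d: "d \<in> {0,1}" and r: "r \<le> K" for d r
  proof -
    have eq: "betaF F d (z r) = thc \<theta> d 0 + lam d 1 (pF F (z r)) * thc \<theta> d 1"
      using A d r unfolding A_eq_def by (auto simp: sum_le1 lam0)
    have pp: "0 < pF F (z r)" "pF F (z r) < 1" using P r pos by force+
    have "\<bar>lam d 1 (pF F (z r)) * thc \<theta> d 1\<bar> \<le> 1 * B"
      unfolding abs_mult using lam_bound[OF pp d] tB[of d 1] by (intro mult_mono) auto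
    then show ?thesis using eq tB[of d 0] B0 by linarith
  qed
  then show "\<forall>d\<in>{0,1}. \<forall>r\<le>K. \<bar>betaF F d (z r)\<bar> \<le> 2 * B" by blast
  have m: "\<bar>c * thc \<theta> d m\<bar> \<le> \<bar>c\<bar> * B" for c d m
    unfolding abs_mult using tB[of d m] by (intro mult_left_mono) auto
  show "\<bar>c_theta cm cr \<theta>\<bar> \<le> 2 * (\<bar>cm\<bar> + \<bar>cr\<bar>) * B"
    unfolding c_theta_def using m[of cm 1 0] m[of cr 1 1] m[of cm 0 0] m[of cr 0 1]
    by (simp add: algebra_simps) linarith
  show "\<forall>d\<in>{0,1}. \<forall>r\<le>K. \<epsilon> \<le> sigma2F F d (z r) \<and> sigma2F F d (z r) \<le> 2 + 8 * B^2 + 2 * \<zeta>"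
  proof (intro ballI allI impI conjI)
    fix d r :: nat assume d: "d \<in> {0,1}" and r: "r \<le> K"
    show se: "\<epsilon> \<le> sigma2F F d (z r)" using inP d r by (auto simp: inP_def)
    have "sigma2F F d (z r) \<le> 2 + 2 * (betaF F d (z r))^2 + 2 * \<zeta>"
      using inP d r se pos by (intro sigma_bound[of F \<delta> \<zeta> d "z r" \<epsilon>]) (auto simp: inP_def)
    moreover have "(betaF F d (z r))^2 \<le> (2 * B)^2"
    proof -
      have "\<bar>betaF F d (z r)\<bar> \<le> \<bar>2 * B\<bar>" using beta[OF d r] B0 by simp
      then show ?thesis by (simp only: abs_le_square_iff)
    qed
    ultimately show "sigma2F F d (z r) \<le> 2 + 8 * B^2 + 2 * \<zeta>" by (simp add: power_mult_distrib)
  qed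
qed

lemma abs_if3: "\<bar>x\<bar> \<le> M \<Longrightarrow> \<bar>y\<bar> \<le> M \<Longrightarrow> 0 \<le> (M::real) \<Longrightarrow> \<bar>if a then x else if b then y else 0\<bar> \<le> M"
  by auto

lemma lin_aux:
  fixes x L M a c B :: real
  assumes "x \<le> L + M" "L \<le> 2*(a+c)*B" "M \<le> a*(4*B)" "0 \<le> a*B" "0 \<le> c*B" "0 \<le> a" "0 \<le> c"
  shows "x \<le> 6*(a+c)*(B+1)"
proof -
  have e1: "6*(a+c)*(B+1) = 6*(a*B) + 6*(c*B) + 6*a + 6*c" by (simp add: algebra_simps)
  have e2: "2*(a+c)*B = 2*(a*B) + 2*(c*B)" by (simp add: algebra_simps)
  have e3: "a*(4*B) = 4*(a*B)" by simp
  have "L \<le> 2*(a*B) + 2*(c*B)" using assms(2) unfolding e2 .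
  moreover have "M \<le> 4*(a*B)" using assms(3) unfolding e3 .
  ultimately have "x \<le> 6*(a*B) + 6*(c*B) + 6*a + 6*c" using assms(1,4,5,6,7) by linarith
  then show ?thesis unfolding e1 .
qed

lemma lin_aux2:
  fixes x a c B :: real
  assumes "x \<le> a * 1 + 2 * c" "0 \<le> a*B" "0 \<le> c*B" "0 \<le> a" "0 \<le> c"
  shows "x \<le> 6*(a+c)*(B+1)"
proof -
  have e1: "6*(a+c)*(B+1) = 6*(a*B) + 6*(c*B) + 6*a + 6*c" by (simp add: algebra_simps)
  have "x \<le> 6*(a*B) + 6*(c*B) + 6*a + 6*c" using assms by linarith
  then show ?thesis unfolding e1 .
qed

lemma J_bounds:
  fixes cm cr l B :: real and p b1 b0 :: "nat \<Rightarrow> real"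
  assumes k: "k \<noteq> 0" and hl: "\<bar>l\<bar> \<le> 2*(\<bar>cm\<bar>+\<bar>cr\<bar>)*B"
    and hb: "\<bar>b1 k\<bar> \<le> 2*B" "\<bar>b0 k\<bar> \<le> 2*B" "\<bar>b1 0\<bar> \<le> 2*B" "\<bar>b0 0\<bar> \<le> 2*B"
    and hp: "0 \<le> p 0" "p 0 \<le> 1" "0 \<le> p k" "p k \<le> 1"
  shows "\<bar>Jp cm cr l p b1 b0 k r\<bar> \<le> 6*(\<bar>cm\<bar>+\<bar>cr\<bar>)*(B+1)"
    and "\<bar>Jb1 cm cr l p b1 b0 k r\<bar> \<le> 6*(\<bar>cm\<bar>+\<bar>cr\<bar>)*(B+1)"
    and "\<bar>Jb0 cm cr l p b1 b0 k r\<bar> \<le> 6*(\<bar>cm\<bar>+\<bar>cr\<bar>)*(B+1)"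
proof -
  have B0: "0 \<le> B" using hb(1) by linarith
  have nn: "0 \<le> \<bar>cm\<bar>*B" "0 \<le> \<bar>cr\<bar>*B" "0 \<le> \<bar>cm\<bar>" "0 \<le> \<bar>cr\<bar>" using B0 by auto
  have M0: "0 \<le> 6*(\<bar>cm\<bar>+\<bar>cr\<bar>)*(B+1)" using B0 by auto
  have d1: "\<bar>b1 k - b0 k\<bar> \<le> 4*B" "\<bar>b1 0 - b0 0\<bar> \<le> 4*B"
    using hb abs_triangle_ineq4[of "b1 k" "b0 k"] abs_triangle_ineq4[of "b1 0" "b0 0"] by linarith+
  have m1: "\<bar>cm * (b1 k - b0 k)\<bar> \<le> \<bar>cm\<bar> * (4*B)" unfolding abs_mult using d1 by (intro mult_left_mono) auto
  have m2: "\<bar>cm * (b1 0 - b0 0)\<bar> \<le> \<bar>cm\<bar> * (4*B)" unfolding abs_mult using d1 by (intro mult_left_mono) auto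
  have t1: "\<bar>- l + cm * (b1 k - b0 k)\<bar> \<le> \<bar>l\<bar> + \<bar>cm * (b1 k - b0 k)\<bar>"
    using abs_triangle_ineq[of "-l" "cm * (b1 k - b0 k)"] by simp
  have t2: "\<bar>l - cm * (b1 0 - b0 0)\<bar> \<le> \<bar>l\<bar> + \<bar>cm * (b1 0 - b0 0)\<bar>"
    by (rule abs_triangle_ineq4)
  show "\<bar>Jp cm cr l p b1 b0 k r\<bar> \<le> 6*(\<bar>cm\<bar>+\<bar>cr\<bar>)*(B+1)"
    unfolding Jp_eq[OF k]
    by (rule abs_if3[OF lin_aux[OF t1 hl m1 nn] lin_aux[OF t2 hl m2 nn] M0])
  have q1: "\<bar>cm * (1 - p k)\<bar> \<le> \<bar>cm\<bar> * 1" "\<bar>cm * (1 - p 0)\<bar> \<le> \<bar>cm\<bar> * 1"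
    "\<bar>cm * p k\<bar> \<le> \<bar>cm\<bar> * 1" "\<bar>cm * p 0\<bar> \<le> \<bar>cm\<bar> * 1"
    unfolding abs_mult using hp by (intro mult_left_mono; auto)+
  have u1: "\<bar>cm*(1 - p k) + 2*cr\<bar> \<le> \<bar>cm\<bar> * 1 + 2 * \<bar>cr\<bar>"
    using abs_triangle_ineq[of "cm*(1 - p k)" "2*cr"] q1 by (simp add: abs_mult)
  have u2: "\<bar>-(cm*(1 - p 0)) - 2*cr\<bar> \<le> \<bar>cm\<bar> * 1 + 2 * \<bar>cr\<bar>"
    using abs_triangle_ineq4[of "-(cm*(1 - p 0))" "2*cr"] q1 by (simp add: abs_mult)
  have u3: "\<bar>cm * p k - 2*cr\<bar> \<le> \<bar>cm\<bar> * 1 + 2 * \<bar>cr\<bar>"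
    using abs_triangle_ineq4[of "cm * p k" "2*cr"] q1 by (simp add: abs_mult)
  have u4: "\<bar>-(cm * p 0) + 2*cr\<bar> \<le> \<bar>cm\<bar> * 1 + 2 * \<bar>cr\<bar>"
    using abs_triangle_ineq[of "-(cm * p 0)" "2*cr"] q1 by (simp add: abs_mult)
  show "\<bar>Jb1 cm cr l p b1 b0 k r\<bar> \<le> 6*(\<bar>cm\<bar>+\<bar>cr\<bar>)*(B+1)"
    unfolding Jb1_eq[OF k] by (rule abs_if3[OF lin_aux2[OF u1 nn] lin_aux2[OF u2 nn] M0])
  show "\<bar>Jb0 cm cr l p b1 b0 k r\<bar> \<le> 6*(\<bar>cm\<bar>+\<bar>cr\<bar>)*(B+1)"
    unfolding Jb0_eq[OF k] by (rule abs_if3[OF lin_aux2[OF u3 nn] lin_aux2[OF u4 nn] M0])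
qed

lemma lo0_le:
  fixes cm cr p0 :: real
  shows "(if cm = 0 then 8 * cr^2 else cm^2/2) \<le> (-(cm*(1-p0)) - 2*cr)^2 + (-(cm*p0) + 2*cr)^2"
proof (cases "cm = 0")
  case True then show ?thesis by (simp add: power2_eq_square)
next
  case False
  define uu where "uu = -(cm*(1-p0)) - 2*cr"
  define ww where "ww = -(cm*p0) + 2*cr"
  have cm: "cm = -(uu + ww)" by (simp add: uu_def ww_def algebra_simps)
  have h: "2*(uu^2 + ww^2) - cm^2 = (uu - ww)^2" unfolding cm by (simp add: power2_eq_square algebra_simps)
  have "0 \<le> 2*(uu^2 + ww^2) - cm^2" unfolding h by simp
  then have "cm^2/2 \<le> uu^2 + ww^2" by simp
  then show ?thesis using False by (simp add: uu_def ww_def)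
qed

theorem lemmaA2:
  fixes K :: nat and z :: "nat \<Rightarrow> 'z"
    and \<delta> \<zeta> \<epsilon> c_mu c_rho :: real
    and \<Theta> :: "((real \<times> real) \<times> (real \<times> real)) set"
  assumes "K \<ge> 1"
    and "inj_on z {0..K}"
    and "\<delta> > 0" and "\<zeta> > 0" and "0 < \<epsilon>" and "\<epsilon> < 1/2"
    and "compact \<Theta>" and "interior \<Theta> \<noteq> {}"
    and "(c_mu, c_rho) \<noteq> (0, 0)"
  shows "(\<exists>lo > 0. \<forall>\<theta> F. inP K z \<delta> \<zeta> \<epsilon> \<Theta> \<theta> F \<longrightarrow>
            (\<forall>e. eigenvalue (S_mat K z c_mu c_rho \<theta> F) e \<longrightarrow> lo \<le> e))
       \<and> (\<exists>hi. \<forall>\<theta> F. inP K z \<delta> \<zeta> \<epsilon> \<Theta> \<theta> F \<longrightarrow>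
            (\<forall>e. eigenvalue (S_mat K z c_mu c_rho \<theta> F) e \<longrightarrow> e \<le> hi))"
proof -
  have pos: "0 < \<epsilon>" "0 < \<delta>" "0 < \<zeta>" "\<epsilon> < 1/2" using assms by auto
  obtain B where Bd: "\<forall>\<theta>\<in>\<Theta>. norm \<theta> \<le> B"
    using compact_imp_bounded[OF assms(7)] unfolding bounded_iff by blast
  define lo0 where "lo0 = (if c_mu = 0 then 8 * c_rho^2 else c_mu^2/2)"
  have lo0pos: "0 < lo0" using assms(9) by (auto simp: lo0_def)
  define CJ where "CJ = 6*(\<bar>c_mu\<bar>+\<bar>c_rho\<bar>)*(B+1)"
  define CS where "CS = 1/\<epsilon> + (2 + 8*B^2 + 2*\<zeta>)/\<epsilon>^2"
  have main: "\<epsilon> * lo0 \<le> e \<and> e \<le> real K * (3 * ((real K + 1) * (CJ*CS*CJ)))"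
    if inP: "inP K z \<delta> \<zeta> \<epsilon> \<Theta> \<theta> F" and eig0: "eigenvalue (S_mat K z c_mu c_rho \<theta> F) e" for \<theta> F e
  proof -
    note fa = facts[OF inP Bd pos]
    define l where "l = c_theta c_mu c_rho \<theta>"
    define p where "p = (\<lambda>r. pF F (z r))"
    define b1 where "b1 = (\<lambda>r. betaF F 1 (z r))"
    define b0 where "b0 = (\<lambda>r. betaF F 0 (z r))"
    define Sp where "Sp = (\<lambda>r. pF F (z r) * (1 - pF F (z r)) / qF F (z r))"
    define Sb1 where "Sb1 = (\<lambda>r. sigma2F F 1 (z r) / qdF F 1 (z r))"
    define Sb0 where "Sb0 = (\<lambda>r. sigma2F F 0 (z r) / qdF F 0 (z r))"
    have Seq: "S_mat K z c_mu c_rho \<theta> F = mat K K (\<lambda>(i,j).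
           (\<Sum>r\<le>K. Jp c_mu c_rho l p b1 b0 (i+1) r * Sp r * Jp c_mu c_rho l p b1 b0 (j+1) r)
         + (\<Sum>r\<le>K. Jb1 c_mu c_rho l p b1 b0 (i+1) r * Sb1 r * Jb1 c_mu c_rho l p b1 b0 (j+1) r)
         + (\<Sum>r\<le>K. Jb0 c_mu c_rho l p b1 b0 (i+1) r * Sb0 r * Jb0 c_mu c_rho l p b1 b0 (j+1) r))"
      unfolding S_mat_def Let_def l_def p_def b1_def b0_def Sp_def Sb1_def Sb0_def by (rule refl)
    have eig: "eigenvalue (mat K K (\<lambda>(i,j).
           (\<Sum>r\<le>K. Jp c_mu c_rho l p b1 b0 (i+1) r * Sp r * Jp c_mu c_rho l p b1 b0 (j+1) r)
         + (\<Sum>r\<le>K. Jb1 c_mu c_rho l p b1 b0 (i+1) r * Sb1 r * Jb1 c_mu c_rho l p b1 b0 (j+1) r)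
         + (\<Sum>r\<le>K. Jb0 c_mu c_rho l p b1 b0 (i+1) r * Sb0 r * Jb0 c_mu c_rho l p b1 b0 (j+1) r))) e"
      using eig0 unfolding Seq .
    have CS1: "1/\<epsilon> \<le> CS" "(2 + 8*B^2 + 2*\<zeta>)/\<epsilon>^2 \<le> CS"
      using pos unfolding CS_def by (auto intro!: divide_nonneg_pos add_nonneg_nonneg)
    have wts: "\<forall>r\<le>K. 0 \<le> Sp r \<and> Sp r \<le> CS \<and> \<epsilon> \<le> Sb1 r \<and> Sb1 r \<le> CS \<and> \<epsilon> \<le> Sb0 r \<and> Sb0 r \<le> CS"
    proof (intro allI impI)
      fix r assume r: "r \<le> K"
      have pr: "\<epsilon> \<le> pF F (z r)" "pF F (z r) \<le> 1-\<epsilon>" and qr: "\<epsilon> \<le> qF F (z r)" "qF F (z r) \<le> 1-\<epsilon>"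
        using fa(1) fa(2) r by auto
      have s1: "\<epsilon> \<le> sigma2F F 1 (z r)" "sigma2F F 1 (z r) \<le> 2 + 8*B^2 + 2*\<zeta>"
        and s0: "\<epsilon> \<le> sigma2F F 0 (z r)" "sigma2F F 0 (z r) \<le> 2 + 8*B^2 + 2*\<zeta>"
        using fa(5) r by auto
      have w1: "\<epsilon> \<le> Sb1 r \<and> Sb1 r \<le> (2 + 8*B^2 + 2*\<zeta>)/\<epsilon>^2"
        unfolding Sb1_def qdF_def using w_bound[of \<epsilon> "pF F (z r)" "qF F (z r)" "sigma2F F 1 (z r)" "2 + 8*B^2 + 2*\<zeta>"]
          pos pr qr s1 by simp
      have w0: "\<epsilon> \<le> Sb0 r \<and> Sb0 r \<le> (2 + 8*B^2 + 2*\<zeta>)/\<epsilon>^2"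
        unfolding Sb0_def qdF_def using w_bound[of \<epsilon> "1 - pF F (z r)" "qF F (z r)" "sigma2F F 0 (z r)" "2 + 8*B^2 + 2*\<zeta>"]
          pos pr qr s0 by simp
      have pp: "0 \<le> pF F (z r) * (1 - pF F (z r))" "pF F (z r) * (1 - pF F (z r)) \<le> 1"
        using pr pos by (auto intro: mult_le_one)
      have "Sp r \<le> 1/\<epsilon>" unfolding Sp_def using pp qr pos by (intro frac_le) auto
      moreover have "0 \<le> Sp r" unfolding Sp_def using pp qr pos by auto
      ultimately show "0 \<le> Sp r \<and> Sp r \<le> CS \<and> \<epsilon> \<le> Sb1 r \<and> Sb1 r \<le> CS \<and> \<epsilon> \<le> Sb0 r \<and> Sb0 r \<le> CS"
        using w1 w0 CS1 by linarith
    qed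
    have lower: "\<epsilon> * lo0 \<le> e"
    proof (rule eig_lower[OF eig, where \<eta>=\<epsilon> and Ya="-(c_mu*(1 - p 0)) - 2*c_rho" and Yb="-(c_mu * p 0) + 2*c_rho"])
      show "\<forall>r\<le>K. 0 \<le> Sp r" "\<forall>r\<le>K. \<epsilon> \<le> Sb1 r" "\<forall>r\<le>K. \<epsilon> \<le> Sb0 r" using wts by auto
      show "0 \<le> \<epsilon>" using pos by simp
      show "\<forall>i<K. Jb1 c_mu c_rho l p b1 b0 (i+1) (i+1) = -(c_mu*(1 - p 0)) - 2*c_rho \<and> (\<forall>r. r \<noteq> 0 \<and> r \<noteq> i+1 \<longrightarrow> Jb1 c_mu c_rho l p b1 b0 (i+1) r = 0)"
        by (simp add: Jb1_eq)
      show "\<forall>i<K. Jb0 c_mu c_rho l p b1 b0 (i+1) (i+1) = -(c_mu * p 0) + 2*c_rho \<and> (\<forall>r. r \<noteq> 0 \<and> r \<noteq> i+1 \<longrightarrow> Jb0 c_mu c_rho l p b1 b0 (i+1) r = 0)"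
        by (simp add: Jb0_eq)
      show "lo0 \<le> (-(c_mu*(1 - p 0)) - 2*c_rho)^2 + (-(c_mu * p 0) + 2*c_rho)^2"
        unfolding lo0_def by (rule lo0_le)
    qed
    have Jb: "\<bar>Jp c_mu c_rho l p b1 b0 k r\<bar> \<le> CJ \<and> \<bar>Jb1 c_mu c_rho l p b1 b0 k r\<bar> \<le> CJ \<and> \<bar>Jb0 c_mu c_rho l p b1 b0 k r\<bar> \<le> CJ"
      if k: "1 \<le> k" "k \<le> K" for k r
    proof -
      have k0: "k \<noteq> 0" using k by simp
      have hl: "\<bar>l\<bar> \<le> 2*(\<bar>c_mu\<bar>+\<bar>c_rho\<bar>)*B" using fa(4)[of c_mu c_rho] by (simp add: l_def)
      have hb: "\<bar>b1 k\<bar> \<le> 2*B" "\<bar>b0 k\<bar> \<le> 2*B" "\<bar>b1 0\<bar> \<le> 2*B" "\<bar>b0 0\<bar> \<le> 2*B"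
        using fa(3) k by (auto simp: b1_def b0_def)
      have hp: "0 \<le> p 0" "p 0 \<le> 1" "0 \<le> p k" "p k \<le> 1"
        using fa(1) k pos by (force simp: p_def)+
      show ?thesis using J_bounds[OF k0 hl hb hp, of r] unfolding CJ_def by auto
    qed
    have bnd: "\<forall>i<K. \<forall>j<K. \<bar>(\<Sum>r\<le>K. Jp c_mu c_rho l p b1 b0 (i+1) r * Sp r * Jp c_mu c_rho l p b1 b0 (j+1) r)
         + (\<Sum>r\<le>K. Jb1 c_mu c_rho l p b1 b0 (i+1) r * Sb1 r * Jb1 c_mu c_rho l p b1 b0 (j+1) r)
         + (\<Sum>r\<le>K. Jb0 c_mu c_rho l p b1 b0 (i+1) r * Sb0 r * Jb0 c_mu c_rho l p b1 b0 (j+1) r)\<bar>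
         \<le> 3 * ((real K + 1) * (CJ*CS*CJ))"
    proof (intro allI impI)
      fix i j assume i: "i < K" and j: "j < K"
      have "1 \<le> i+1" "i+1 \<le> K" "1 \<le> j+1" "j+1 \<le> K" using i j by auto
      note Ji = Jb[OF this(1,2)] and Jj = Jb[OF this(3,4)]
      have a: "\<bar>\<Sum>r\<le>K. Jp c_mu c_rho l p b1 b0 (i+1) r * Sp r * Jp c_mu c_rho l p b1 b0 (j+1) r\<bar> \<le> (real K + 1) * (CJ*CS*CJ)"
        using Ji Jj wts by (intro sum_term_bound) auto
      have b: "\<bar>\<Sum>r\<le>K. Jb1 c_mu c_rho l p b1 b0 (i+1) r * Sb1 r * Jb1 c_mu c_rho l p b1 b0 (j+1) r\<bar> \<le> (real K + 1) * (CJ*CS*CJ)"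
        using Ji Jj wts pos by (intro sum_term_bound) (auto intro: order_trans[of 0 \<epsilon>])
      have c: "\<bar>\<Sum>r\<le>K. Jb0 c_mu c_rho l p b1 b0 (i+1) r * Sb0 r * Jb0 c_mu c_rho l p b1 b0 (j+1) r\<bar> \<le> (real K + 1) * (CJ*CS*CJ)"
        using Ji Jj wts pos by (intro sum_term_bound) (auto intro: order_trans[of 0 \<epsilon>])
      show "\<bar>(\<Sum>r\<le>K. Jp c_mu c_rho l p b1 b0 (i+1) r * Sp r * Jp c_mu c_rho l p b1 b0 (j+1) r)
         + (\<Sum>r\<le>K. Jb1 c_mu c_rho l p b1 b0 (i+1) r * Sb1 r * Jb1 c_mu c_rho l p b1 b0 (j+1) r)
         + (\<Sum>r\<le>K. Jb0 c_mu c_rho l p b1 b0 (i+1) r * Sb0 r * Jb0 c_mu c_rho l p b1 b0 (j+1) r)\<bar>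
         \<le> 3 * ((real K + 1) * (CJ*CS*CJ))"
        using a b c by linarith
    qed
    have "e \<le> real K * (3 * ((real K + 1) * (CJ*CS*CJ)))"
      by (rule eig_upper[OF eig bnd])
    then show ?thesis using lower by simp
  qed
  show ?thesis
  proof
    show "\<exists>lo > 0. \<forall>\<theta> F. inP K z \<delta> \<zeta> \<epsilon> \<Theta> \<theta> F \<longrightarrow>
            (\<forall>e. eigenvalue (S_mat K z c_mu c_rho \<theta> F) e \<longrightarrow> lo \<le> e)"
      using main lo0pos pos by (intro exI[of _ "\<epsilon> * lo0"]) auto
    show "\<exists>hi. \<forall>\<theta> F. inP K z \<delta> \<zeta> \<epsilon> \<Theta> \<theta> F \<longrightarrow>
            (\<forall>e. eigenvalue (S_mat K z c_mu c_rho \<theta> F) e \<longrightarrow> e \<le> hi)"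
      using main by (intro exI[of _ "real K * (3 * ((real K + 1) * (CJ*CS*CJ)))"]) auto
  qed
qed

end
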